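(* The uniform matroid $U_{2,4}$ (ground set of 4 elements, bases = all 2-element subsets) is not BUMAC; that is, there is no binary MAC $W$ with 4 users such that $I(X[S];Y,X[S^c])$ equals the rank function of $U_{2,4}$ on $\{1,2,3,4\}$ (namely $\min(|S|,2)$) for all $S\subseteq\{1,2,3,4\}$.
   Context: A binary MAC with $m$ users is a channel $W$ with input alphabet $\mathbb{F}_2^m$ and finite output alphabet $\mathcal{Y}$. Let $E_m=\{1,\dots,m\}$, let $X[E_m]$ have i.i.d. uniform components on $\mathbb{F}_2$, and let $Y$ be the output of $W$ with input $X[E_m]$. For $S\subseteq E_m$, $X[S]=(X[i])_{i\in S}$, $S^c=E_m\setminus S$. Mutual information is in bits. A matroid is BUMAC if it is isomorphic to the matroid on $E_m$ with rank function $S\mapsto I(X[S];Y,X[S^c])$ for some binary MAC $W$. *)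

theory Defs
  imports Main "HOL-Library.FuncSet" "HOL-Library.Log_Nat" Complex_Main
begin

text \<open>Users are indexed by E_m = {1..m}; F_2 is represented by bool.
  An input vector is an extensional function in {1..m} \<rightarrow>E UNIV.\<close>

definition users :: "nat \<Rightarrow> nat set" where
  "users m = {1..m}"

definition inputs :: "nat \<Rightarrow> (nat \<Rightarrow> bool) set" where
  "inputs m = users m \<rightarrow>\<^sub>E (UNIV :: bool set)"

text \<open>A binary MAC with m users and finite output alphabet 'y:
  W x y is the transition probability W(y|x).\<close>
definition binary_mac :: "nat \<Rightarrow> ((nat \<Rightarrow> bool) \<Rightarrow> 'y::finite \<Rightarrow> real) \<Rightarrow> bool" where
  "binary_mac m W \<longleftrightarrow>
     (\<forall>x\<in>inputs m. (\<forall>y. 0 \<le> W x y) \<and> (\<Sum>y\<in>UNIV. W x y) = 1)"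

definition prob_ev :: "'o set \<Rightarrow> ('o \<Rightarrow> real) \<Rightarrow> ('o \<Rightarrow> bool) \<Rightarrow> real" where
  "prob_ev \<Omega> q E = (\<Sum>\<omega>\<in>{\<omega>\<in>\<Omega>. E \<omega>}. q \<omega>)"

text \<open>Mutual information (in bits) between discrete random variables f and g
  on a finite sample space \<Omega> with pmf q:
  I(f;g) = sum_\<omega> q(\<omega>) log2 (P(f=f\<omega>, g=g\<omega>) / (P(f=f\<omega>) P(g=g\<omega>))),
  with the convention 0 log 0 = 0 (terms with q \<omega> = 0 vanish).\<close>
definition mutual_info ::
  "'o set \<Rightarrow> ('o \<Rightarrow> real) \<Rightarrow> ('o \<Rightarrow> 'a) \<Rightarrow> ('o \<Rightarrow> 'b) \<Rightarrow> real" where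
  "mutual_info \<Omega> q f g =
     (\<Sum>\<omega>\<in>\<Omega>. q \<omega> * log 2
        (prob_ev \<Omega> q (\<lambda>\<omega>'. f \<omega>' = f \<omega> \<and> g \<omega>' = g \<omega>) /
         (prob_ev \<Omega> q (\<lambda>\<omega>'. f \<omega>' = f \<omega>) * prob_ev \<Omega> q (\<lambda>\<omega>'. g \<omega>' = g \<omega>))))"

text \<open>I(X[S]; Y, X[S^c]) for uniform i.i.d. inputs X on F_2^m and output Y of W.
  Sample space: pairs (x, y), with probability 2^{-m} W(y|x).\<close>
definition mac_rank ::
  "nat \<Rightarrow> ((nat \<Rightarrow> bool) \<Rightarrow> 'y::finite \<Rightarrow> real) \<Rightarrow> nat set \<Rightarrow> real" where
  "mac_rank m W S =
     mutual_info (inputs m \<times> (UNIV :: 'y set))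
       (\<lambda>(x, y). W x y / 2 ^ m)
       (\<lambda>(x, y). restrict x S)
       (\<lambda>(x, y). (y, restrict x (users m - S)))"

end

theory Submission
  imports Defs
begin

definition Tsum :: "((nat \<Rightarrow> bool) \<Rightarrow> 'y::finite \<Rightarrow> real) \<Rightarrow> nat set \<Rightarrow> (nat \<Rightarrow> bool) \<Rightarrow> 'y \<Rightarrow> real" where
  "Tsum W S x y = (\<Sum>x'\<in>{x'\<in>inputs 4. \<forall>i\<in>users 4 - S. x' i = x i}. W x' y)"

lemma finite_inputs: "finite (inputs m)"
  unfolding inputs_def users_def by (intro finite_PiE) auto

lemma card_users: "card (users 4) = 4" by (simp add: users_def)

lemma card_agree:
  assumes "x \<in> inputs 4" "S \<subseteq> users 4"
  shows "card {x'\<in>inputs 4. \<forall>i\<in>S. x' i = x i} = 2 ^ (4 - card S)"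
proof -
  have "{x'\<in>inputs 4. \<forall>i\<in>S. x' i = x i} = PiE (users 4) (\<lambda>i. if i \<in> S then {x i} else UNIV)"
  proof (rule set_eqI, rule iffI)
    fix f assume "f \<in> {x'\<in>inputs 4. \<forall>i\<in>S. x' i = x i}"
    then show "f \<in> PiE (users 4) (\<lambda>i. if i \<in> S then {x i} else UNIV)"
      unfolding inputs_def by (simp add: PiE_iff)
  next
    fix f assume f: "f \<in> PiE (users 4) (\<lambda>i. if i \<in> S then {x i} else UNIV)"
    have "f \<in> inputs 4" using f unfolding inputs_def by (simp add: PiE_iff)
    moreover have "\<forall>i\<in>S. f i = x i"
    proof
      fix i assume "i \<in> S"
      then have "i \<in> users 4" using assms(2) by blast
      then have "f i \<in> (if i \<in> S then {x i} else UNIV)" using f by (simp add: PiE_iff)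
      then show "f i = x i" using \<open>i \<in> S\<close> by simp
    qed
    ultimately show "f \<in> {x'\<in>inputs 4. \<forall>i\<in>S. x' i = x i}" by simp
  qed
  then have "card {x'\<in>inputs 4. \<forall>i\<in>S. x' i = x i} = (\<Prod>i\<in>users 4. card (if i \<in> S then {x i} else (UNIV::bool set)))"
    by (simp add: card_PiE users_def)
  also have "\<dots> = (\<Prod>i\<in>users 4. if i \<in> S then 1 else 2)"
    by (rule prod.cong) auto
  also have "\<dots> = 2 ^ card (users 4 - S)"
    by (simp add: prod.If_cases users_def Diff_eq)
  also have "card (users 4 - S) = 4 - card S"
    using assms(2) by (simp add: card_Diff_subset finite_subset users_def)
  finally show ?thesis .
qed

lemma card_inputs: "card (inputs 4) = 16"
  unfolding inputs_def by (simp add: card_PiE users_def)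

lemma restrict_eq_inputs:
  assumes "a \<in> inputs 4" "b \<in> inputs 4" "restrict a S = restrict b S"
    "restrict a (users 4 - S) = restrict b (users 4 - S)"
  shows "a = b"
proof (rule ext)
  fix i
  show "a i = b i"
  proof (cases "i \<in> users 4")
    case True
    show ?thesis
    proof (cases "i \<in> S")
      case True
      then show ?thesis using fun_cong[OF assms(3), of i] by simp
    next
      case False
      then show ?thesis using fun_cong[OF assms(4), of i] \<open>i \<in> users 4\<close> by simp
    qed
  next
    case False
    then show ?thesis using assms(1,2) unfolding inputs_def by (metis PiE_arb)
  qed
qed

lemma restrict_eq_iff': "restrict a S = restrict b S \<longleftrightarrow> (\<forall>i\<in>S. a i = b i)"
  by (auto simp: restrict_def fun_eq_iff)

lemma rank_formula:
  fixes W :: "(nat \<Rightarrow> bool) \<Rightarrow> 'y::finite \<Rightarrow> real"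
  assumes mac: "binary_mac 4 W" and S: "S \<subseteq> users 4"
  shows "mac_rank 4 W S = real (card S) +
    (\<Sum>p\<in>inputs 4 \<times> UNIV. W (fst p) (snd p) / 16 * log 2 (W (fst p) (snd p) / Tsum W S (fst p) (snd p)))"
proof -
  define \<Omega> where "\<Omega> = inputs 4 \<times> (UNIV :: 'y set)"
  define q where "q = (\<lambda>p. W (fst p) (snd p) / (2::real) ^ 4)"
  define k where "k = card S"
  have W0: "\<And>x y. x \<in> inputs 4 \<Longrightarrow> 0 \<le> W x y" and W1: "\<And>x. x \<in> inputs 4 \<Longrightarrow> (\<Sum>y\<in>UNIV. W x y) = 1"
    using mac unfolding binary_mac_def by auto
  have finI: "finite (inputs 4)" by (rule finite_inputs)
  have kle: "k \<le> 4" unfolding k_def using card_mono[OF _ S] card_users by (simp add: users_def)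
  have pt: "q p * log 2 (prob_ev \<Omega> q (\<lambda>\<omega>'. restrict (fst \<omega>') S = restrict (fst p) S \<and>
          (snd \<omega>', restrict (fst \<omega>') (users 4 - S)) = (snd p, restrict (fst p) (users 4 - S))) /
        (prob_ev \<Omega> q (\<lambda>\<omega>'. restrict (fst \<omega>') S = restrict (fst p) S) *
         prob_ev \<Omega> q (\<lambda>\<omega>'. (snd \<omega>', restrict (fst \<omega>') (users 4 - S)) = (snd p, restrict (fst p) (users 4 - S)))))
      = q p * (real k + log 2 (W (fst p) (snd p) / Tsum W S (fst p) (snd p)))"
    if p: "p \<in> \<Omega>" for p
  proof -
    obtain x y where pxy: "p = (x, y)" by (cases p)
    have x: "x \<in> inputs 4" using p pxy \<Omega>_def by auto
    define B where "B = {x'\<in>inputs 4. \<forall>i\<in>S. x' i = x i}"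
    define C where "C = {x'\<in>inputs 4. \<forall>i\<in>users 4 - S. x' i = x i}"
    have finB: "finite B" unfolding B_def using finI by simp
    have finC: "finite C" unfolding C_def using finI by simp
    have e1: "{\<omega>'\<in>\<Omega>. restrict (fst \<omega>') S = restrict (fst p) S \<and>
          (snd \<omega>', restrict (fst \<omega>') (users 4 - S)) = (snd p, restrict (fst p) (users 4 - S))} = {p}"
    proof (rule set_eqI)
      fix w :: "(nat \<Rightarrow> bool) \<times> 'y"
      obtain a b where w: "w = (a, b)" by (cases w)
      show "w \<in> {\<omega>'\<in>\<Omega>. restrict (fst \<omega>') S = restrict (fst p) S \<and>
          (snd \<omega>', restrict (fst \<omega>') (users 4 - S)) = (snd p, restrict (fst p) (users 4 - S))} \<longleftrightarrow> w \<in> {p}"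
      proof
        assume "w \<in> {\<omega>'\<in>\<Omega>. restrict (fst \<omega>') S = restrict (fst p) S \<and>
          (snd \<omega>', restrict (fst \<omega>') (users 4 - S)) = (snd p, restrict (fst p) (users 4 - S))}"
        then have a: "a \<in> inputs 4" and r1: "restrict a S = restrict x S" and b: "b = y"
          and r2: "restrict a (users 4 - S) = restrict x (users 4 - S)"
          unfolding w pxy \<Omega>_def by simp_all
        have "a = x" by (rule restrict_eq_inputs[OF a x r1 r2])
        then show "w \<in> {p}" using b w pxy by simp
      next
        assume "w \<in> {p}"
        then show "w \<in> {\<omega>'\<in>\<Omega>. restrict (fst \<omega>') S = restrict (fst p) S \<and>
          (snd \<omega>', restrict (fst \<omega>') (users 4 - S)) = (snd p, restrict (fst p) (users 4 - S))}"
          using p by simp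
      qed
    qed
    have e2: "{\<omega>'\<in>\<Omega>. restrict (fst \<omega>') S = restrict (fst p) S} = B \<times> UNIV"
    proof (rule set_eqI)
      fix w :: "(nat \<Rightarrow> bool) \<times> 'y"
      obtain a b where w: "w = (a, b)" by (cases w)
      show "w \<in> {\<omega>'\<in>\<Omega>. restrict (fst \<omega>') S = restrict (fst p) S} \<longleftrightarrow> w \<in> B \<times> UNIV"
        unfolding w pxy \<Omega>_def B_def by (simp only: restrict_eq_iff' mem_Collect_eq mem_Sigma_iff fst_conv snd_conv UNIV_I simp_thms)
    qed
    have e3: "{\<omega>'\<in>\<Omega>. (snd \<omega>', restrict (fst \<omega>') (users 4 - S)) = (snd p, restrict (fst p) (users 4 - S))} = C \<times> {y}"
    proof (rule set_eqI)
      fix w :: "(nat \<Rightarrow> bool) \<times> 'y"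
      obtain a b where w: "w = (a, b)" by (cases w)
      show "w \<in> {\<omega>'\<in>\<Omega>. (snd \<omega>', restrict (fst \<omega>') (users 4 - S)) = (snd p, restrict (fst p) (users 4 - S))} \<longleftrightarrow> w \<in> C \<times> {y}"
        unfolding w pxy \<Omega>_def C_def by (simp only: restrict_eq_iff' prod.inject mem_Collect_eq mem_Sigma_iff fst_conv snd_conv UNIV_I simp_thms singleton_iff) blast
    qed
    have P1: "prob_ev \<Omega> q (\<lambda>\<omega>'. restrict (fst \<omega>') S = restrict (fst p) S \<and>
          (snd \<omega>', restrict (fst \<omega>') (users 4 - S)) = (snd p, restrict (fst p) (users 4 - S))) = W x y / 16"
      unfolding prob_ev_def e1 by (simp add: q_def pxy)
    have "prob_ev \<Omega> q (\<lambda>\<omega>'. restrict (fst \<omega>') S = restrict (fst p) S) = (\<Sum>x'\<in>B. \<Sum>y'\<in>UNIV. W x' y' / 16)"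
      unfolding prob_ev_def e2 q_def by (simp add: sum.cartesian_product case_prod_unfold)
    also have "\<dots> = (\<Sum>x'\<in>B. 1 / 16)"
      by (rule sum.cong[OF refl]) (auto simp: B_def W1 simp flip: sum_divide_distrib)
    also have "\<dots> = 2 ^ (4 - k) / 16"
      using card_agree[OF x S] by (simp add: B_def k_def)
    finally have P2: "prob_ev \<Omega> q (\<lambda>\<omega>'. restrict (fst \<omega>') S = restrict (fst p) S) = 2 ^ (4 - k) / 16" .
    have "prob_ev \<Omega> q (\<lambda>\<omega>'. (snd \<omega>', restrict (fst \<omega>') (users 4 - S)) = (snd p, restrict (fst p) (users 4 - S)))
        = (\<Sum>x'\<in>C. W x' y / 16)"
    proof -
      have "C \<times> {y} = (\<lambda>x'. (x', y)) ` C" by auto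
      then show ?thesis unfolding prob_ev_def e3 q_def by (simp add: sum.reindex inj_on_def)
    qed
    also have "\<dots> = Tsum W S x y / 16" unfolding Tsum_def C_def by (simp add: sum_divide_distrib)
    finally have P3: "prob_ev \<Omega> q (\<lambda>\<omega>'. (snd \<omega>', restrict (fst \<omega>') (users 4 - S)) = (snd p, restrict (fst p) (users 4 - S)))
        = Tsum W S x y / 16" .
    have qp: "q p = W x y / 16" unfolding q_def pxy by simp
    show ?thesis
    proof (cases "W x y = 0")
      case True
      then show ?thesis unfolding qp by simp
    next
      case False
      then have Wpos: "W x y > 0" using W0[OF x, of y] by simp
      have "x \<in> C" unfolding C_def using x by simp
      then have "W x y \<le> Tsum W S x y" unfolding Tsum_def C_def[symmetric]
        using finC W0 by (intro member_le_sum) (auto simp: C_def)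
      then have Tpos: "Tsum W S x y > 0" using Wpos by simp
      have p2: "(2::real) ^ (4 - k) * 2 ^ k = 16" using kle by (simp flip: power_add)
      have "(W x y / 16) / ((2 ^ (4 - k) / 16) * (Tsum W S x y / 16)) = 2 ^ k * (W x y / Tsum W S x y)"
        using Tpos p2 by (simp add: field_simps)
      moreover have "log 2 (2 ^ k * (W x y / Tsum W S x y)) = real k + log 2 (W x y / Tsum W S x y)"
      proof -
        have z: "W x y / Tsum W S x y > 0" using Wpos Tpos by simp
        have "log 2 ((2::real) ^ k * (W x y / Tsum W S x y)) = log 2 ((2::real) ^ k) + log 2 (W x y / Tsum W S x y)"
          using z by (intro log_mult_pos) auto
        moreover have "log 2 ((2::real) ^ k) = real k" by (simp add: log_nat_power)
        ultimately show ?thesis by simp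
      qed
      ultimately show ?thesis unfolding P1 P2 P3 qp by (simp add: pxy)
    qed
  qed
  have "mac_rank 4 W S = (\<Sum>p\<in>\<Omega>. q p * (real k + log 2 (W (fst p) (snd p) / Tsum W S (fst p) (snd p))))"
    unfolding mac_rank_def mutual_info_def case_prod_unfold
    unfolding \<Omega>_def[symmetric] q_def[symmetric]
    apply (rule sum.cong[OF refl])
    subgoal for p using pt[of p] by (simp add: q_def)
    done
  also have "\<dots> = real k * (\<Sum>p\<in>\<Omega>. q p) + (\<Sum>p\<in>\<Omega>. q p * log 2 (W (fst p) (snd p) / Tsum W S (fst p) (snd p)))"
    by (simp add: distrib_left sum.distrib sum_distrib_left mult.commute mult.left_commute)
  also have "(\<Sum>p\<in>\<Omega>. q p) = 1"
  proof -
    have "(\<Sum>p\<in>\<Omega>. q p) = (\<Sum>x\<in>inputs 4. \<Sum>y\<in>UNIV. W x y / 16)"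
      unfolding \<Omega>_def q_def by (simp add: sum.cartesian_product case_prod_unfold)
    also have "\<dots> = (\<Sum>x\<in>inputs 4. 1 / 16)"
      by (rule sum.cong[OF refl]) (auto simp: W1 simp flip: sum_divide_distrib)
    also have "\<dots> = 1" by (simp add: card_inputs)
    finally show ?thesis .
  qed
  finally show ?thesis unfolding k_def \<Omega>_def q_def by simp
qed

lemma comb:
  fixes a b c :: "nat \<Rightarrow> bool"
  shows "(a 1 = b 1 \<and> a 2 = b 2) \<or> (a 1 = b 1 \<and> a 3 = b 3) \<or> (a 1 = b 1 \<and> a 4 = b 4) \<or>
         (a 2 = b 2 \<and> a 3 = b 3) \<or> (a 2 = b 2 \<and> a 4 = b 4) \<or> (a 3 = b 3 \<and> a 4 = b 4) \<or>
         (a 1 = c 1 \<and> a 2 = c 2) \<or> (a 1 = c 1 \<and> a 3 = c 3) \<or> (a 1 = c 1 \<and> a 4 = c 4) \<or>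
         (a 2 = c 2 \<and> a 3 = c 3) \<or> (a 2 = c 2 \<and> a 4 = c 4) \<or> (a 3 = c 3 \<and> a 4 = c 4) \<or>
         (c 1 = b 1 \<and> c 2 = b 2) \<or> (c 1 = b 1 \<and> c 3 = b 3) \<or> (c 1 = b 1 \<and> c 4 = b 4) \<or>
         (c 2 = b 2 \<and> c 3 = b 3) \<or> (c 2 = b 2 \<and> c 4 = b 4) \<or> (c 3 = b 3 \<and> c 4 = b 4)"
  by (cases "a 1"; cases "a 2"; cases "a 3"; cases "a 4"; cases "b 1"; cases "b 2"; cases "b 3"; cases "b 4"; simp; blast)

lemma ln2_gt: "ln (2::real) > 1/2"
proof -
  have a: "ln (3/4::real) \<le> 3/4 - 1" by (rule ln_le_minus_one) simp
  have b: "ln (2/3::real) \<le> 2/3 - 1" by (rule ln_le_minus_one) simp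
  have "ln (3/4::real) + ln (2/3) = ln ((3/4) * (2/3))" by (subst ln_mult) auto
  also have "(3/4::real) * (2/3) = 1/2" by simp
  also have "ln (1/2::real) = - ln 2" by (simp add: ln_div)
  finally show ?thesis using a b by linarith
qed

theorem mainTheorem2:
  fixes W :: "(nat \<Rightarrow> bool) \<Rightarrow> 'y::finite \<Rightarrow> real"
  assumes "binary_mac 4 W"
  shows "\<not> (\<forall>S\<subseteq>users 4. mac_rank 4 W S = real (min (card S) 2))"
proof
  assume H: "\<forall>S\<subseteq>users 4. mac_rank 4 W S = real (min (card S) 2)"
  have W0: "\<And>x y. x \<in> inputs 4 \<Longrightarrow> 0 \<le> W x y" and W1: "\<And>x. x \<in> inputs 4 \<Longrightarrow> (\<Sum>y\<in>UNIV. W x y) = 1"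
    using assms unfolding binary_mac_def by auto
  have finI: "finite (inputs 4)" by (rule finite_inputs)
  have finO: "finite (inputs 4 \<times> (UNIV :: 'y set))" using finI by simp
  define D where "D S = (\<Sum>p\<in>inputs 4 \<times> (UNIV :: 'y set). W (fst p) (snd p) / 16 * log 2 (W (fst p) (snd p) / Tsum W S (fst p) (snd p)))" for S
  have Tge: "W x y \<le> Tsum W S x y" if "x \<in> inputs 4" for x y S
    unfolding Tsum_def using that finI W0 by (intro member_le_sum) auto
  have tnp: "W (fst p) (snd p) / 16 * log 2 (W (fst p) (snd p) / Tsum W S (fst p) (snd p)) \<le> 0"
    if "p \<in> inputs 4 \<times> (UNIV :: 'y set)" for p S
  proof (cases "W (fst p) (snd p) = 0")
    case True then show ?thesis by simp
  next
    case False
    have x: "fst p \<in> inputs 4" using that by auto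
    have Wp: "W (fst p) (snd p) > 0" using False W0[OF x, of "snd p"] by linarith
    have "W (fst p) (snd p) / Tsum W S (fst p) (snd p) \<le> 1" using Tge[OF x, of "snd p" S] Wp by (simp add: divide_le_eq_1)
    then have "log 2 (W (fst p) (snd p) / Tsum W S (fst p) (snd p)) \<le> 0"
      using Wp Tge[OF x, of "snd p" S] by (simp add: log_le_zero_cancel_iff)
    then show ?thesis using Wp by (simp add: mult_nonneg_nonpos)
  qed
  have D2: "D S = 0" if "S \<subseteq> users 4" "card S = 2" for S
    using rank_formula[OF assms that(1)] H that unfolding D_def by simp
  have cardU: "card (users 4) = 4" by (rule card_users)
  have DU: "D (users 4) = -2"
    using rank_formula[OF assms subset_refl] H cardU unfolding D_def by simp
  have supp: "W x' y = 0" if S: "S \<subseteq> users 4" "card S = 2" and x: "x \<in> inputs 4" and Wp: "W x y > 0"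
    and x': "x' \<in> inputs 4" "x' \<noteq> x" and ag: "\<forall>i\<in>users 4 - S. x' i = x i" for S x y x'
  proof -
    define f where "f p = - (W (fst p) (snd p) / 16 * log 2 (W (fst p) (snd p) / Tsum W S (fst p) (snd p)))" for p
    have "sum f (inputs 4 \<times> (UNIV :: 'y set)) = 0"
      using D2[OF S] unfolding D_def f_def by (simp add: sum_negf)
    moreover have "\<forall>p\<in>inputs 4 \<times> (UNIV :: 'y set). 0 \<le> f p"
    proof
      fix p assume "p \<in> inputs 4 \<times> (UNIV :: 'y set)"
      from tnp[OF this, of S] show "0 \<le> f p" unfolding f_def by linarith
    qed
    ultimately have "\<forall>p\<in>inputs 4 \<times> (UNIV :: 'y set). f p = 0"
      using sum_nonneg_eq_0_iff[OF finO, of f] by blast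
    then have "f (x, y) = 0" using x by blast
    then have "W x y / 16 * log 2 (W x y / Tsum W S x y) = 0" unfolding f_def by simp
    then have l0: "log 2 (W x y / Tsum W S x y) = 0" using Wp by simp
    have Tp: "Tsum W S x y > 0" using Tge[OF x, of y S] Wp by simp
    have "ln (W x y / Tsum W S x y) = 0" using l0 by (simp add: log_def)
    then have "W x y / Tsum W S x y = 1" using Wp Tp by simp
    then have eq: "Tsum W S x y = W x y" using Tp by (simp add: field_simps)
    have "(\<Sum>z\<in>{x, x'}. W z y) \<le> Tsum W S x y"
      unfolding Tsum_def using finI x x' ag W0 by (intro sum_mono2) auto
    then have "W x y + W x' y \<le> W x y" using x' eq by simp
    then show ?thesis using W0[OF x'(1), of y] by simp
  qed
  have close: False if ij: "i \<in> users 4" "j \<in> users 4" "i \<noteq> j" and uv: "u \<in> inputs 4" "v \<in> inputs 4" "u \<noteq> v"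
    and pos: "W u y > 0" "W v y > 0" and ag: "u i = v i" "u j = v j" for i j u v y
  proof -
    define S where "S = users 4 - {i, j}"
    have S1: "S \<subseteq> users 4" unfolding S_def by auto
    have S2: "card S = 2" unfolding S_def using ij cardU by (simp add: card_Diff_subset users_def)
    have "users 4 - S = {i, j}" unfolding S_def using ij by auto
    then have "\<forall>l\<in>users 4 - S. v l = u l" using ag by auto
    then have "W v y = 0" using supp[OF S1 S2 uv(1) pos(1) uv(2)] uv(3) by auto
    then show False using pos by simp
  qed
  have close6: "\<not> (u 1 = v 1 \<and> u 2 = v 2) \<and> \<not> (u 1 = v 1 \<and> u 3 = v 3) \<and> \<not> (u 1 = v 1 \<and> u 4 = v 4) \<and>
      \<not> (u 2 = v 2 \<and> u 3 = v 3) \<and> \<not> (u 2 = v 2 \<and> u 4 = v 4) \<and> \<not> (u 3 = v 3 \<and> u 4 = v 4)"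
    if "u \<in> inputs 4" "v \<in> inputs 4" "u \<noteq> v" "W u y > 0" "W v y > 0" for u v y
  proof -
    have U: "1 \<in> users 4" "2 \<in> users 4" "3 \<in> users 4" "4 \<in> users 4" by (simp_all add: users_def)
    have ne: "(1::nat) \<noteq> 2" "(1::nat) \<noteq> 3" "(1::nat) \<noteq> 4" "(2::nat) \<noteq> 3" "(2::nat) \<noteq> 4" "(3::nat) \<noteq> 4" by simp_all
    show ?thesis using close[OF U(1) U(2) _ that, OF ne(1)] close[OF U(1) U(3) _ that, OF ne(2)] close[OF U(1) U(4) _ that, OF ne(3)] close[OF U(2) U(3) _ that, OF ne(4)] close[OF U(2) U(4) _ that, OF ne(5)] close[OF U(3) U(4) _ that, OF ne(6)] by blast
  qed
  have cardA: "card {x\<in>inputs 4. W x y > 0} \<le> 2" for y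
  proof (rule ccontr)
    assume "\<not> ?thesis"
    then have "3 \<le> card {x\<in>inputs 4. W x y > 0}" by simp
    then obtain T where T: "T \<subseteq> {x\<in>inputs 4. W x y > 0}" "card T = 3"
      by (meson obtain_subset_with_card_n)
    then obtain a b c where abc: "T = {a, b, c}" "a \<noteq> b" "b \<noteq> c" "a \<noteq> c" by (auto simp: card_3_iff)
    have a: "a \<in> inputs 4" "W a y > 0" and b: "b \<in> inputs 4" "W b y > 0" and c: "c \<in> inputs 4" "W c y > 0"
      using T abc by auto
    show False
      using comb[of a b c] close6[OF a(1) b(1) abc(2) a(2) b(2)] close6[OF a(1) c(1) abc(4) a(2) c(2)]
        close6[OF c(1) b(1) abc(3)[symmetric] c(2) b(2)] by argo
  qed
  define Ty where "Ty y = (\<Sum>x\<in>inputs 4. W x y)" for y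
  have TU: "Tsum W (users 4) x y = Ty y" for x y unfolding Tsum_def Ty_def by simp
  have l2: "ln (2::real) > 0" by simp
  define g where "g p = (if W (fst p) (snd p) > 0 then (W (fst p) (snd p) - Ty (snd p)) / (16 * ln 2) else 0)" for p
  have tb: "g p \<le> W (fst p) (snd p) / 16 * log 2 (W (fst p) (snd p) / Tsum W (users 4) (fst p) (snd p))"
    if p: "p \<in> inputs 4 \<times> (UNIV :: 'y set)" for p
  proof (cases "W (fst p) (snd p) > 0")
    case False
    then have "W (fst p) (snd p) = 0" using W0[of "fst p" "snd p"] p by auto
    then show ?thesis using False unfolding g_def by simp
  next
    case True
    define w where "w = W (fst p) (snd p)"
    define t where "t = Ty (snd p)"
    have wp: "w > 0" using True w_def by simp
    have tw: "w \<le> t" using Tge[of "fst p" "snd p" "users 4"] p TU unfolding w_def t_def by auto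
    then have tp: "t > 0" using wp by simp
    have "ln (t / w) \<le> t / w - 1" by (rule ln_le_minus_one) (use wp tp in simp)
    moreover have "ln (w / t) = - ln (t / w)" using wp tp by (simp add: ln_div)
    ultimately have "ln (w / t) \<ge> 1 - t / w" by simp
    then have "w * ln (w / t) \<ge> w * (1 - t / w)" using wp by (simp add: mult_left_mono)
    also have "w * (1 - t / w) = w - t" using wp by (simp add: field_simps)
    finally have k: "w - t \<le> w * ln (w / t)" .
    have "(w - t) / (16 * ln 2) \<le> w * ln (w / t) / (16 * ln 2)"
      using k l2 by (intro divide_right_mono) auto
    also have "\<dots> = w / 16 * log 2 (w / t)" by (simp add: log_def)
    finally show ?thesis using True unfolding g_def w_def t_def TU by simp
  qed
  have "(\<Sum>p\<in>inputs 4 \<times> (UNIV :: 'y set). g p) \<le> D (users 4)"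
    unfolding D_def by (rule sum_mono) (rule tb)
  moreover have "(\<Sum>p\<in>inputs 4 \<times> (UNIV :: 'y set). g p) = (\<Sum>y\<in>UNIV. \<Sum>x\<in>inputs 4. g (x, y))"
  proof -
    have "(\<Sum>p\<in>inputs 4 \<times> (UNIV :: 'y set). g p) = (\<Sum>x\<in>inputs 4. \<Sum>y\<in>UNIV. g (x, y))"
      using sum.cartesian_product[where g="\<lambda>x y. g (x, y)" and A="inputs 4" and B="UNIV :: 'y set"] by simp
    also have "\<dots> = (\<Sum>y\<in>UNIV. \<Sum>x\<in>inputs 4. g (x, y))" by (rule sum.swap)
    finally show ?thesis .
  qed
  moreover have "(\<Sum>x\<in>inputs 4. g (x, y)) \<ge> - Ty y / (16 * ln 2)" for y
  proof -
    define A where "A = {x\<in>inputs 4. W x y > 0}"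
    have finA: "finite A" unfolding A_def using finI by simp
    have sA: "(\<Sum>x\<in>A. W x y) = Ty y"
      unfolding A_def Ty_def
    proof (subst sum.inter_filter[OF finI], rule sum.cong[OF refl])
      fix x assume "x \<in> inputs 4"
      then show "(if 0 < W x y then W x y else 0) = W x y" using W0[of x y] by auto
    qed
    have "(\<Sum>x\<in>inputs 4. g (x, y)) = (\<Sum>x\<in>inputs 4. if W x y > 0 then (W x y - Ty y) / (16 * ln 2) else 0)"
      by (rule sum.cong[OF refl]) (simp add: g_def)
    also have "\<dots> = (\<Sum>x\<in>A. (W x y - Ty y) / (16 * ln 2))"
      unfolding A_def by (rule sum.inter_filter[OF finI, symmetric])
    also have "\<dots> = (Ty y - real (card A) * Ty y) / (16 * ln 2)"
      by (simp add: sum_divide_distrib[symmetric] sum_subtractf sA)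
    also have "\<dots> \<ge> - Ty y / (16 * ln 2)"
    proof -
      have "Ty y \<ge> 0" unfolding Ty_def using W0 by (simp add: sum_nonneg)
      moreover have "real (card A) \<le> 2" using cardA[of y] unfolding A_def by simp
      ultimately have "real (card A) * Ty y \<le> 2 * Ty y" by (simp add: mult_right_mono)
      then have "- Ty y \<le> Ty y - real (card A) * Ty y" by simp
      then show ?thesis using l2 by (intro divide_right_mono) auto
    qed
    finally show ?thesis .
  qed
  then have "(\<Sum>y\<in>UNIV. \<Sum>x\<in>inputs 4. g (x, y)) \<ge> (\<Sum>y\<in>(UNIV::'y set). - Ty y / (16 * ln 2))"
    by (intro sum_mono) auto
  moreover have "(\<Sum>y\<in>(UNIV::'y set). - Ty y / (16 * ln 2)) = - 1 / ln 2"
  proof -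
    have "(\<Sum>y\<in>(UNIV::'y set). Ty y) = (\<Sum>x\<in>inputs 4. \<Sum>y\<in>UNIV. W x y)"
      unfolding Ty_def by (rule sum.swap)
    also have "\<dots> = (\<Sum>x\<in>inputs 4. 1)" by (rule sum.cong[OF refl]) (simp add: W1)
    also have "\<dots> = 16" by (simp add: card_inputs)
    finally have "(\<Sum>y\<in>(UNIV::'y set). Ty y) = 16" .
    then show ?thesis by (simp add: sum_divide_distrib[symmetric] sum_negf)
  qed
  ultimately have "- 1 / ln 2 \<le> D (users 4)" by linarith
  then have "- 1 / ln (2::real) \<le> -2" using DU by simp
  then have "1 \<ge> 2 * ln (2::real)" using l2 by (simp add: field_simps)
  then show False using ln2_gt by simp
qed

end
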